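(* Let $K\ge 2$ and let $O_1,\dots,O_K\subset\mathbb{R}^3$ be watertight objects with signed distance functions $SDF_1,\dots,SDF_K$, and set $SDF=[SDF_1,\ldots,SDF_K]:\mathbb{R}^3\to\mathbb{R}^K$. Then $SDF$ satisfies $\min^{(2)}(\mathbf{u})\ge 0$ at every point $\mathbf{p}\in\mathbb{R}^3$, where $\mathbf{u}=SDF(\mathbf{p})$, if and only if it satisfies $$\min^{(1)}(\mathbf{u})+\min^{(2)}(\mathbf{u})\ge 0$$ at every point $\mathbf{p}\in\mathbb{R}^3$, where $\mathbf{u}=SDF(\mathbf{p})$.
   Context: For a watertight object $O\subset\mathbb{R}^3$ with boundary $\partial O$, its signed distance function is $SDF_O(\mathbf{p})=-\min_{\mathbf{q}\in\partial O}\|\mathbf{p}-\mathbf{q}\|$ if $\mathbf{p}\in O$ and $SDF_O(\mathbf{p})=\min_{\mathbf{q}\in\partial O}\|\mathbf{p}-\mathbf{q}\|$ if $\mathbf{p}\notin O$ (negative inside, positive outside). For a vector $\mathbf{u}\in\mathbb{R}^K$, $\min^{(n)}(\mathbf{u})$ denotes the $n$-th smallest entry of $\mathbf{u}$ (counted with multiplicity), so $\min^{(1)}$ is the minimum and $\min^{(2)}$ the second smallest entry. *)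

theory Defs
  imports "HOL-Analysis.Analysis"
begin

text \<open>A watertight object: a nonempty compact solid that is the closure of its
interior (regular closed), so inside/outside and the boundary are well defined.\<close>
definition watertight :: "(real^3) set \<Rightarrow> bool" where
  "watertight S \<longleftrightarrow> S \<noteq> {} \<and> compact S \<and> closure (interior S) = S"

definition sdf :: "(real^3) set \<Rightarrow> real^3 \<Rightarrow> real" where
  "sdf S p = (if p \<in> S then - infdist p (frontier S) else infdist p (frontier S))"

text \<open>n-th smallest entry (counted with multiplicity), n \<ge> 1.\<close>
definition kmin :: "nat \<Rightarrow> real list \<Rightarrow> real" where
  "kmin n u = sort u ! (n - 1)"

end

theory Submission
  imports Defs "HOL-Combinatorics.Permutations"
begin

lemma sort_idx:
  fixes u :: "real list"
  assumes "length u \<ge> 2"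
  obtains i j where "i < length u" "j < length u" "i \<noteq> j"
    "sort u ! 0 = u ! i" "sort u ! 1 = u ! j"
proof -
  have "mset (sort u) = mset u" by simp
  then obtain p where p: "p permutes {..<length u}" "permute_list p u = sort u"
    by (rule mset_eq_permutation)
  have h: "sort u ! k = u ! p k" if "k < length u" for k
    using p that by (metis permute_list_nth)
  have "sort u ! 0 = u ! p 0" "sort u ! 1 = u ! p 1" using h[of 0] h[of 1] assms by (force, force)
  moreover have "p 0 < length u" "p 1 < length u"
    using assms permutes_in_image[OF p(1), of 0] permutes_in_image[OF p(1), of 1] by auto
  moreover have "p 0 \<noteq> p 1" using permutes_inj[OF p(1)] by (metis injD zero_neq_one)
  ultimately show ?thesis using that by blast
qed

lemma two_neg:
  fixes v :: "real list"
  assumes "i < length v" "j < length v" "i \<noteq> j" "v ! i < 0" "v ! j < 0"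
  shows "sort v ! 1 < 0"
proof -
  have "mset v = mset (sort v)" by simp
  then obtain p where p: "p permutes {..<length (sort v)}" "permute_list p (sort v) = v"
    by (rule mset_eq_permutation)
  have vi: "v ! k = sort v ! p k" if "k < length v" for k
    using p that by (metis length_sort permute_list_nth)
  have "p i \<noteq> p j" using permutes_inj[OF p(1)] assms(3) by (metis injD)
  then obtain k where k: "k \<in> {i, j}" "p k \<ge> 1" by (metis insertCI less_one not_less)
  have "p k < length v" using k assms permutes_in_image[OF p(1), of k] by auto
  then have "sort v ! 1 \<le> sort v ! p k"
    using k by (intro sorted_nth_mono) auto
  also have "\<dots> = v ! k" using vi k assms by auto
  finally show ?thesis using k assms by auto
qed

lemma frontier_ne:
  assumes "watertight S" shows "frontier S \<noteq> {}" "closed (frontier S)"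
proof -
  have "S \<noteq> {}" "compact S" using assms by (auto simp: watertight_def)
  moreover have "S \<noteq> UNIV" using \<open>compact S\<close> not_bounded_UNIV compact_imp_bounded by blast
  ultimately show "frontier S \<noteq> {}" by (intro frontier_not_empty)
  show "closed (frontier S)" by simp
qed

lemma interior_neg:
  assumes "watertight S" "q \<in> interior S" shows "sdf S q < 0"
proof -
  have "q \<notin> frontier S" using assms(2) by (simp add: frontier_def)
  then have "infdist q (frontier S) > 0"
    using frontier_ne[OF assms(1)] infdist_pos_not_in_closed by blast
  then show ?thesis using assms(2) interior_subset by (auto simp: sdf_def)
qed

lemma neg_ball:
  assumes "watertight S" "sdf S p = - d" "d > 0"
  shows "ball p d \<subseteq> interior S"
proof -
  have pS: "p \<in> S" using assms by (auto simp: sdf_def split: if_splits intro: infdist_nonneg)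
    (smt (verit) infdist_nonneg)
  have dd: "infdist p (frontier S) = d" using assms pS by (simp add: sdf_def)
  have nf: "ball p d \<inter> frontier S = {}"
  proof (rule ccontr)
    assume "ball p d \<inter> frontier S \<noteq> {}"
    then obtain y where "y \<in> frontier S" "dist p y < d" by auto
    then show False using infdist_le[of y "frontier S" p] dd by auto
  qed
  have "ball p d \<subseteq> S"
  proof (rule ccontr)
    assume "\<not> ball p d \<subseteq> S"
    then have "ball p d - S \<noteq> {}" by auto
    moreover have "ball p d \<inter> S \<noteq> {}" using pS assms(3) by (metis centre_in_ball disjoint_iff)
    ultimately have "ball p d \<inter> frontier S \<noteq> {}"
      by (intro connected_Int_frontier) auto
    then show False using nf by simp
  qed
  then show ?thesis by (simp add: interior_maximal)
qed

lemma near_interior: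
  assumes "watertight T" "sdf T p < d" "d > 0"
  shows "ball p d \<inter> interior T \<noteq> {}"
proof -
  have cl: "closure (interior T) = T" "closed T"
    using assms(1) by (auto simp: watertight_def compact_imp_closed)
  obtain y where y: "y \<in> T" "dist p y < d"
  proof (cases "p \<in> T")
    case True then show ?thesis using that assms(3) by auto
  next
    case False
    then have "infdist p (frontier T) < d" using assms(2) by (simp add: sdf_def)
    moreover obtain y where "y \<in> frontier T" "infdist p (frontier T) = dist p y"
      using infdist_attains_inf frontier_ne[OF assms(1)] by metis
    moreover have "frontier T \<subseteq> T" using cl(2) by (simp add: frontier_subset_closed)
    ultimately show ?thesis using that by auto
  qed
  then have "ball p d \<inter> closure (interior T) \<noteq> {}" using cl by auto
  then show ?thesis using open_Int_closure_eq_empty[of "ball p d" "interior T"] by auto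
qed

theorem theorem1:
  fixes Os :: "(real^3) set list"
  assumes "length Os \<ge> 2"
    and "\<forall>S\<in>set Os. watertight S"
  shows "(\<forall>p. kmin 2 (map (\<lambda>S. sdf S p) Os) \<ge> 0) \<longleftrightarrow>
         (\<forall>p. kmin 1 (map (\<lambda>S. sdf S p) Os) + kmin 2 (map (\<lambda>S. sdf S p) Os) \<ge> 0)"
proof
  assume B: "\<forall>p. kmin 1 (map (\<lambda>S. sdf S p) Os) + kmin 2 (map (\<lambda>S. sdf S p) Os) \<ge> 0"
  show "\<forall>p. kmin 2 (map (\<lambda>S. sdf S p) Os) \<ge> 0"
  proof
    fix p
    let ?u = "map (\<lambda>S. sdf S p) Os"
    have "sort ?u ! 0 \<le> sort ?u ! 1" using assms(1) by (intro sorted_nth_mono) auto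
    then show "kmin 2 ?u \<ge> 0" using B[rule_format, of p] by (simp add: kmin_def)
  qed
next
  assume A: "\<forall>p. kmin 2 (map (\<lambda>S. sdf S p) Os) \<ge> 0"
  show "\<forall>p. kmin 1 (map (\<lambda>S. sdf S p) Os) + kmin 2 (map (\<lambda>S. sdf S p) Os) \<ge> 0"
  proof (rule allI, rule ccontr)
    fix p
    let ?u = "map (\<lambda>S. sdf S p) Os"
    assume neg: "\<not> kmin 1 ?u + kmin 2 ?u \<ge> 0"
    have x1: "sort ?u ! 1 \<ge> 0" using A by (simp add: kmin_def)
    obtain i j where ij: "i < length Os" "j < length Os" "i \<noteq> j"
      "sort ?u ! 0 = ?u ! i" "sort ?u ! 1 = ?u ! j"
      using sort_idx[of ?u] assms(1) by auto
    define d where "d = - sdf (Os ! i) p"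
    have sum: "sdf (Os ! i) p + sdf (Os ! j) p < 0" using neg ij by (simp add: kmin_def)
    have sj: "sdf (Os ! j) p \<ge> 0" using x1 ij by simp
    have dpos: "d > 0" using sum sj d_def by linarith
    have wi: "watertight (Os ! i)" "watertight (Os ! j)" using assms(2) ij by auto
    have b1: "ball p d \<subseteq> interior (Os ! i)"
      using neg_ball[OF wi(1) _ dpos] d_def by simp
    have "sdf (Os ! j) p < d" using sum d_def by linarith
    then obtain q where q: "q \<in> ball p d" "q \<in> interior (Os ! j)"
      using near_interior[OF wi(2) _ dpos] by blast
    have "sdf (Os ! i) q < 0" "sdf (Os ! j) q < 0"
      using interior_neg[OF wi(1)] interior_neg[OF wi(2)] q b1 by auto
    then have "sort (map (\<lambda>S. sdf S q) Os) ! 1 < 0"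
      using two_neg[of i "map (\<lambda>S. sdf S q) Os" j] ij by auto
    then show False using A[rule_format, of q] by (simp add: kmin_def)
  qed
qed

end
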